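(* For the estimators defined in the context (and assuming all matrices inverted below and in the context are invertible), $$\hat\tau_{\mathrm{pdd}}=\hat\tau^y_{\mathrm{rdd}}-(\hat\tau^w_{\mathrm{rdd}})^\top\hat\gamma_- \quad\text{exactly (numerically), for every sample.}$$ Moreover $$\hat\gamma_-=\Big[\tfrac1n\sum_{i=1}^n\omega_{i,-}Z_i(W_i^\perp)^\top\Big]^{-1}\Big\{\tfrac1n\sum_{i=1}^n\omega_{i,-}Z_iY_i^\perp\Big\}.$$ Here the residuals from local linear regressions on the running variable below the cutoff are $$Y_i^\perp=Y_i-R_{i,1}^\top\Big(\sum_{j}\omega_{j,-}R_{j,1}R_{j,1}^\top\Big)^{-1}\sum_j\omega_{j,-}R_{j,1}Y_j,$$ $$W_i^{\perp\top}=W_i^\top-R_{i,1}^\top\Big(\sum_{j}\omega_{j,-}R_{j,1}R_{j,1}^\top\Big)^{-1}\sum_j\omega_{j,-}R_{j,1}W_j^\top.$$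
   Context: Data and cutoff. The data are observations $(Y_i,W_i,D_i,Z_i)$, $i=1,\dots,n$, with $Y_i,D_i\in\mathbb{R}$ and $W_i,Z_i\in\mathbb{R}^q$. The cutoff $d^*$ is known. $K\ge0$ is a kernel and $h_n>0$ a bandwidth. Basic objects: - Kernel weights: $\omega_{i,+}=h_n^{-1}\mathbf{1}\{D_i\ge d^*\}K(|D_i-d^*|/h_n)$ and $\omega_{i,-}=h_n^{-1}\mathbf{1}\{D_i<d^*\}K(|D_i-d^*|/h_n)$. - $R_{i,1}=(1,(D_i-d^* )/h_n)^\top$ and $H_1=\mathrm{diag}(1,h_n)$. Local linear fits. For $v\in\{y,w_1,\dots,w_q\}$ (with corresponding data $Y_i$ or $W_{i,j}$) and $s\in\{+,-\}$, define $\hat\beta^v_s$ by $$H_1\hat\beta^v_s=\arg\min_\beta\sum_i\omega_{i,s}(V_i-R_{i,1}^\top\beta)^2.$$ Let $\hat\beta^v_{s,0}$ be its first component and $\hat\beta^w_{s,0}=(\hat\beta^{w_1}_{s,0},\dots,\hat\beta^{w_q}_{s,0})^\top$. Set $\hat\tau^y_{\mathrm{rdd}}=\hat\beta^y_{+,0}-\hat\beta^y_{-,0}$ and $\hat\tau^w_{\mathrm{rdd}}=\hat\beta^w_{+,0}-\hat\beta^w_{-,0}\in\mathbb{R}^q$. Local instrumental variable regression. For $s\in\{+,-\}$, $(\hat\alpha_s,\hat\gamma_s)\in\mathbb{R}^2\times\mathbb{R}^q$ solve $$\frac1n\sum_{i=1}^n\omega_{i,s}\begin{bmatrix}R_{i,1}\\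 Z_i\end{bmatrix}\big(Y_i-R_{i,1}^\top H_1\hat\alpha_s-W_i^\top\hat\gamma_s\big)=0,$$ and $\hat\alpha_{s,0}$ denotes the first component of $\hat\alpha_s$. Estimator. The placebo discontinuity estimator is $$\hat\tau_{\mathrm{pdd}}=\hat\alpha_{+,0}+(\hat\beta^w_{+,0})^\top\hat\gamma_+-\big\{\hat\alpha_{-,0}+(\hat\beta^w_{+,0})^\top\hat\gamma_-\big\}.$$ *)

theory Defs
  imports "HOL-Analysis.Analysis"
begin

definition vec2 :: "real \<Rightarrow> real \<Rightarrow> real^2" where
  "vec2 a b = (\<chi> i. if i = 1 then a else b)"

definition outer :: "real^'m \<Rightarrow> real^'n \<Rightarrow> real^'n^'m" where
  "outer u v = (\<chi> i j. u $ i * v $ j)"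

definition w_plus :: "(nat \<Rightarrow> real) \<Rightarrow> real \<Rightarrow> (real \<Rightarrow> real) \<Rightarrow> real \<Rightarrow> nat \<Rightarrow> real" where
  "w_plus D d K h i = (1 / h) * (if D i \<ge> d then 1 else 0) * K (\<bar>D i - d\<bar> / h)"

definition w_minus :: "(nat \<Rightarrow> real) \<Rightarrow> real \<Rightarrow> (real \<Rightarrow> real) \<Rightarrow> real \<Rightarrow> nat \<Rightarrow> real" where
  "w_minus D d K h i = (1 / h) * (if D i < d then 1 else 0) * K (\<bar>D i - d\<bar> / h)"

definition Rvec :: "(nat \<Rightarrow> real) \<Rightarrow> real \<Rightarrow> real \<Rightarrow> nat \<Rightarrow> real^2" where
  "Rvec D d h i = vec2 1 ((D i - d) / h)"

definition H1 :: "real \<Rightarrow> real^2^2" where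
  "H1 h = (\<chi> i j. if i = j then (if i = 1 then 1 else h) else 0)"

definition is_ll_argmin :: "nat \<Rightarrow> (nat \<Rightarrow> real) \<Rightarrow> (nat \<Rightarrow> real^2) \<Rightarrow> (nat \<Rightarrow> real) \<Rightarrow> real^2 \<Rightarrow> bool" where
  "is_ll_argmin n \<omega> R V b \<longleftrightarrow>
     (\<forall>c. (\<Sum>i<n. \<omega> i * (V i - R i \<bullet> b)^2) \<le> (\<Sum>i<n. \<omega> i * (V i - R i \<bullet> c)^2))"

definition llfit :: "nat \<Rightarrow> real \<Rightarrow> (nat \<Rightarrow> real) \<Rightarrow> (nat \<Rightarrow> real^2) \<Rightarrow> (nat \<Rightarrow> real) \<Rightarrow> real^2" where
  "llfit n h \<omega> R V = (SOME \<beta>. is_ll_argmin n \<omega> R V (H1 h *v \<beta>))"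

definition beta_y0 :: "nat \<Rightarrow> real \<Rightarrow> (nat \<Rightarrow> real) \<Rightarrow> (nat \<Rightarrow> real^2) \<Rightarrow> (nat \<Rightarrow> real) \<Rightarrow> real" where
  "beta_y0 n h \<omega> R Y = llfit n h \<omega> R Y $ 1"

definition beta_w0 :: "nat \<Rightarrow> real \<Rightarrow> (nat \<Rightarrow> real) \<Rightarrow> (nat \<Rightarrow> real^2) \<Rightarrow> (nat \<Rightarrow> real^'q) \<Rightarrow> real^'q" where
  "beta_w0 n h \<omega> R W = (\<chi> j. llfit n h \<omega> R (\<lambda>i. W i $ j) $ 1)"

definition iv_eq :: "nat \<Rightarrow> real \<Rightarrow> (nat \<Rightarrow> real) \<Rightarrow> (nat \<Rightarrow> real^2) \<Rightarrow> (nat \<Rightarrow> real)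
     \<Rightarrow> (nat \<Rightarrow> real^'q) \<Rightarrow> (nat \<Rightarrow> real^'q) \<Rightarrow> real^2 \<Rightarrow> real^'q \<Rightarrow> bool" where
  "iv_eq n h \<omega> R Y W Z \<alpha> \<gamma> \<longleftrightarrow>
     (1 / real n) *\<^sub>R (\<Sum>i<n. (\<omega> i * (Y i - R i \<bullet> (H1 h *v \<alpha>) - W i \<bullet> \<gamma>)) *\<^sub>R R i) = 0 \<and>
     (1 / real n) *\<^sub>R (\<Sum>i<n. (\<omega> i * (Y i - R i \<bullet> (H1 h *v \<alpha>) - W i \<bullet> \<gamma>)) *\<^sub>R Z i) = 0"

definition iv_sol :: "nat \<Rightarrow> real \<Rightarrow> (nat \<Rightarrow> real) \<Rightarrow> (nat \<Rightarrow> real^2) \<Rightarrow> (nat \<Rightarrow> real)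
     \<Rightarrow> (nat \<Rightarrow> real^'q) \<Rightarrow> (nat \<Rightarrow> real^'q) \<Rightarrow> (real^2) \<times> (real^'q)" where
  "iv_sol n h \<omega> R Y W Z = (SOME p. iv_eq n h \<omega> R Y W Z (fst p) (snd p))"

definition gram :: "nat \<Rightarrow> (nat \<Rightarrow> real) \<Rightarrow> (nat \<Rightarrow> real^2) \<Rightarrow> real^2^2" where
  "gram n \<omega> R = (\<Sum>j<n. \<omega> j *\<^sub>R outer (R j) (R j))"

definition Y_perp :: "nat \<Rightarrow> (nat \<Rightarrow> real) \<Rightarrow> (nat \<Rightarrow> real^2) \<Rightarrow> (nat \<Rightarrow> real) \<Rightarrow> nat \<Rightarrow> real" where
  "Y_perp n \<omega> R Y i = Y i - R i \<bullet> (matrix_inv (gram n \<omega> R) *v (\<Sum>j<n. (\<omega> j * Y j) *\<^sub>R R j))"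

definition W_perp :: "nat \<Rightarrow> (nat \<Rightarrow> real) \<Rightarrow> (nat \<Rightarrow> real^2) \<Rightarrow> (nat \<Rightarrow> real^'q) \<Rightarrow> nat \<Rightarrow> real^'q" where
  "W_perp n \<omega> R W i = W i - R i v* (matrix_inv (gram n \<omega> R) ** (\<Sum>j<n. \<omega> j *\<^sub>R outer (R j) (W j)))"

end

theory Submission imports Defs begin

lemma minv: assumes "invertible (A::real^'n^'m)"
  shows "A ** matrix_inv A = mat 1" "matrix_inv A ** A = mat 1"
  using someI_ex[OF assms[unfolded invertible_def]] unfolding matrix_inv_def by auto

lemma minv_v: assumes "invertible (A::real^'n^'m)"
  shows "matrix_inv A *v (A *v x) = x" "A *v (matrix_inv A *v y) = y"
  using minv[OF assms] by (simp_all add: matrix_vector_mul_assoc)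

lemma outer_sum_mulv:
  "(\<Sum>i\<in>S. c i *\<^sub>R outer (u i) (v i)) *v (x::real^'n) = (\<Sum>i\<in>S. (c i * (v i \<bullet> x)) *\<^sub>R (u i::real^'m))"
  by (simp add: vec_eq_iff matrix_vector_mult_def outer_def inner_vec_def sum_distrib_left
      sum_distrib_right sum.swap[of _ S] mult_ac)

lemma gram_mulv: "gram n \<omega> R *v a = (\<Sum>i<n. (\<omega> i * (R i \<bullet> a)) *\<^sub>R R i)"
  unfolding gram_def outer_sum_mulv by (simp add: inner_commute)

lemma quad_expand:
  fixes R :: "nat \<Rightarrow> real^2"
  shows "(\<Sum>i<n. \<omega> i * (V i - R i \<bullet> c)^2) = (\<Sum>i<n. \<omega> i * (V i - R i \<bullet> b)^2)
     - 2 * ((\<Sum>i<n. (\<omega> i * (V i - R i \<bullet> b)) *\<^sub>R R i) \<bullet> (c - b))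
     + (\<Sum>i<n. \<omega> i * (R i \<bullet> (c - b))^2)"
proof -
  have "\<And>i. \<omega> i * (V i - R i \<bullet> c)^2 = \<omega> i * (V i - R i \<bullet> b)^2
      - 2 * (\<omega> i * (V i - R i \<bullet> b) * (R i \<bullet> (c - b))) + \<omega> i * (R i \<bullet> (c - b))^2"
    by (simp add: inner_diff_right power2_eq_square algebra_simps)
  then show ?thesis
    by (simp add: sum.distrib sum_subtractf inner_sum_left sum_distrib_left)
qed

lemma normal_argmin:
  assumes nn: "\<And>i. \<omega> i \<ge> 0" and ne: "gram n \<omega> R *v b = (\<Sum>i<n. (\<omega> i * V i) *\<^sub>R R i)"
  shows "is_ll_argmin n \<omega> R V b"
proof -
  have z: "(\<Sum>i<n. (\<omega> i * (V i - R i \<bullet> b)) *\<^sub>R R i) = 0"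
    using ne by (simp add: gram_mulv algebra_simps scaleR_diff_left sum_subtractf)
  show ?thesis unfolding is_ll_argmin_def
  proof
    fix c
    show "(\<Sum>i<n. \<omega> i * (V i - R i \<bullet> b)^2) \<le> (\<Sum>i<n. \<omega> i * (V i - R i \<bullet> c)^2)"
      unfolding quad_expand[of \<omega> V R c n b] z using nn
      by (simp add: sum_nonneg)
  qed
qed

lemma argmin_unique:
  assumes nn: "\<And>i. \<omega> i \<ge> 0" and inv: "invertible (gram n \<omega> R)"
    and ne: "gram n \<omega> R *v b0 = (\<Sum>i<n. (\<omega> i * V i) *\<^sub>R R i)"
    and am: "is_ll_argmin n \<omega> R V b"
  shows "b = b0"
proof -
  have z: "(\<Sum>i<n. (\<omega> i * (V i - R i \<bullet> b0)) *\<^sub>R R i) = 0"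
    using ne by (simp add: gram_mulv algebra_simps scaleR_diff_left sum_subtractf)
  have le: "(\<Sum>i<n. \<omega> i * (V i - R i \<bullet> b)^2) \<le> (\<Sum>i<n. \<omega> i * (V i - R i \<bullet> b0)^2)"
    using am unfolding is_ll_argmin_def by blast
  have "(\<Sum>i<n. \<omega> i * (R i \<bullet> (b - b0))^2) \<le> 0"
    using le unfolding quad_expand[of \<omega> V R b n b0] z by simp
  moreover have "\<forall>i\<in>{..<n}. \<omega> i * (R i \<bullet> (b - b0))^2 \<ge> 0" using nn by simp
  ultimately have "(\<Sum>i<n. \<omega> i * (R i \<bullet> (b - b0))^2) = 0"
    by (meson antisym sum_nonneg)
  hence "\<forall>i\<in>{..<n}. \<omega> i * (R i \<bullet> (b - b0))^2 = 0"
    using sum_nonneg_eq_0_iff[of "{..<n}" "\<lambda>i. \<omega> i * (R i \<bullet> (b - b0))^2"] nn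
    by simp
  hence "\<forall>i\<in>{..<n}. \<omega> i * (R i \<bullet> (b - b0)) = 0" by simp
  hence "gram n \<omega> R *v (b - b0) = 0" unfolding gram_mulv by (intro sum.neutral) auto
  hence "b - b0 = 0" using minv_v(1)[OF inv, of "b - b0"] by simp
  thus ?thesis by simp
qed

lemma H1_mulv: "(H1 h *v \<beta>) $ i = (if i = 1 then 1 else h) * \<beta> $ i"
proof -
  have "(H1 h *v \<beta>) $ i = (\<Sum>j\<in>UNIV. if i = j then (if i = 1 then 1 else h) * \<beta> $ j else 0)"
    unfolding matrix_vector_mult_def vec_lambda_beta
  proof (rule sum.cong[OF refl])
    fix j show "H1 h $ i $ j * \<beta> $ j = (if i = j then (if i = 1 then 1 else h) * \<beta> $ j else 0)"
      unfolding H1_def by simp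
  qed
  also have "... = (if i = 1 then 1 else h) * \<beta> $ i" by simp
  finally show ?thesis .
qed

lemma llfit_eq:
  assumes nn: "\<And>i. \<omega> i \<ge> 0" and inv: "invertible (gram n \<omega> R)" and h: "h > 0"
  shows "llfit n h \<omega> R V $ 1 = (matrix_inv (gram n \<omega> R) *v (\<Sum>i<n. (\<omega> i * V i) *\<^sub>R R i)) $ 1"
proof -
  define b0 where "b0 = matrix_inv (gram n \<omega> R) *v (\<Sum>i<n. (\<omega> i * V i) *\<^sub>R R i)"
  have ne: "gram n \<omega> R *v b0 = (\<Sum>i<n. (\<omega> i * V i) *\<^sub>R R i)"
    unfolding b0_def using minv_v(2)[OF inv] by simp
  define \<beta>0 :: "real^2" where "\<beta>0 = (\<chi> i. if i = 1 then b0 $ i else b0 $ i / h)"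
  have "H1 h *v \<beta>0 = b0" using h by (simp add: vec_eq_iff H1_mulv \<beta>0_def)
  hence ex: "\<exists>\<beta>. is_ll_argmin n \<omega> R V (H1 h *v \<beta>)"
    using normal_argmin[OF nn ne] by metis
  have "is_ll_argmin n \<omega> R V (H1 h *v llfit n h \<omega> R V)"
    unfolding llfit_def by (rule someI_ex[OF ex])
  hence "H1 h *v llfit n h \<omega> R V = b0" by (rule argmin_unique[OF nn inv ne])
  hence "(H1 h *v llfit n h \<omega> R V) $ 1 = b0 $ 1" by simp
  thus ?thesis by (simp add: H1_mulv b0_def)
qed


lemma P_entry:
  "(matrix_inv G *v (\<Sum>i<n. (\<omega> i * W i $ j) *\<^sub>R (R i::real^2))) $ k
   = (matrix_inv G ** (\<Sum>i<n. \<omega> i *\<^sub>R outer (R i) (W i))) $ k $ j"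
  by (simp add: matrix_matrix_mult_def matrix_vector_mult_def outer_def mult_ac)

lemma iv_main:
  fixes Y :: "nat \<Rightarrow> real" and W Z :: "nat \<Rightarrow> real^'q" and R :: "nat \<Rightarrow> real^2"
  assumes inv: "invertible (gram n \<omega> R)"
    and iv: "iv_eq n h \<omega> R Y W Z \<alpha> \<gamma>"
  defines "P \<equiv> matrix_inv (gram n \<omega> R) ** (\<Sum>j<n. \<omega> j *\<^sub>R outer (R j) (W j))"
    and "bY \<equiv> matrix_inv (gram n \<omega> R) *v (\<Sum>j<n. (\<omega> j * Y j) *\<^sub>R R j)"
  shows "(H1 h *v \<alpha>) $ 1 = bY $ 1 - (\<chi> j. P $ 1 $ j) \<bullet> \<gamma>"
    and "(1 / real n) *\<^sub>R (\<Sum>i<n. (\<omega> i * (Y_perp n \<omega> R Y i - W_perp n \<omega> R W i \<bullet> \<gamma>)) *\<^sub>R Z i) = 0"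
proof -
  define a where "a = H1 h *v \<alpha>"
  define G where "G = gram n \<omega> R"
  define M where "M = (\<Sum>j<n. \<omega> j *\<^sub>R outer (R j) (W j))"
  have S0: "(\<Sum>i<n. (\<omega> i * (Y i - R i \<bullet> a - W i \<bullet> \<gamma>)) *\<^sub>R R i) = 0"
  proof (cases "n = 0")
    case True then show ?thesis by simp
  next
    case False then show ?thesis using iv unfolding iv_eq_def a_def by simp
  qed
  have Mg: "M *v \<gamma> = (\<Sum>i<n. (\<omega> i * (W i \<bullet> \<gamma>)) *\<^sub>R R i)"
    unfolding M_def by (rule outer_sum_mulv)
  have "(\<Sum>i<n. (\<omega> i * (Y i - R i \<bullet> a - W i \<bullet> \<gamma>)) *\<^sub>R R i)
      = (\<Sum>i<n. (\<omega> i * Y i) *\<^sub>R R i) - G *v a - M *v \<gamma>"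
    unfolding Mg G_def gram_mulv
    by (simp add: algebra_simps scaleR_diff_left sum_subtractf sum.distrib)
  hence h0: "(\<Sum>i<n. (\<omega> i * Y i) *\<^sub>R R i) - G *v a = M *v \<gamma>" using S0 by simp
  hence Ga: "G *v a = (\<Sum>i<n. (\<omega> i * Y i) *\<^sub>R R i) - M *v \<gamma>" 
  proof -
    have "G *v a = (\<Sum>i<n. (\<omega> i * Y i) *\<^sub>R R i) - ((\<Sum>i<n. (\<omega> i * Y i) *\<^sub>R R i) - G *v a)" by simp
    also have "... = (\<Sum>i<n. (\<omega> i * Y i) *\<^sub>R R i) - M *v \<gamma>" by (simp only: h0)
    finally show ?thesis .
  qed
  have invG: "invertible G" using inv G_def by simp
  have "G *v (bY - P *v \<gamma>) = (\<Sum>i<n. (\<omega> i * Y i) *\<^sub>R R i) - M *v \<gamma>"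
    unfolding bY_def P_def G_def[symmetric] M_def[symmetric]
    by (simp add: matrix_vector_mult_diff_distrib minv_v(2)[OF invG]
        matrix_vector_mul_assoc[symmetric])
  hence "G *v a = G *v (bY - P *v \<gamma>)" using Ga by simp
  hence aeq: "a = bY - P *v \<gamma>"
    by (metis minv_v(1)[OF invG])
  have "(P *v \<gamma>) $ 1 = (\<chi> j. P $ 1 $ j) \<bullet> \<gamma>"
    by (simp add: matrix_vector_mult_def inner_vec_def)
  then show "(H1 h *v \<alpha>) $ 1 = bY $ 1 - (\<chi> j. P $ 1 $ j) \<bullet> \<gamma>"
    using aeq a_def by simp
  have pt: "\<And>i. Y i - R i \<bullet> a - W i \<bullet> \<gamma> = Y_perp n \<omega> R Y i - W_perp n \<omega> R W i \<bullet> \<gamma>"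
    unfolding Y_perp_def W_perp_def aeq bY_def[symmetric] P_def[symmetric]
    by (simp add: inner_diff_left inner_diff_right dot_lmul_matrix)
  show "(1 / real n) *\<^sub>R (\<Sum>i<n. (\<omega> i * (Y_perp n \<omega> R Y i - W_perp n \<omega> R W i \<bullet> \<gamma>)) *\<^sub>R Z i) = 0"
    using iv unfolding iv_eq_def a_def[symmetric] pt by simp
qed

lemma w_nonneg:
  assumes "\<And>u. K u \<ge> 0" "h > 0"
  shows "w_plus D d K h i \<ge> 0" "w_minus D d K h i \<ge> 0"
  using assms by (simp_all add: w_plus_def w_minus_def)

theorem proposition1:
  fixes n :: nat and Y D :: "nat \<Rightarrow> real" and W Z :: "nat \<Rightarrow> real^'q"
    and d h :: real and K :: "real \<Rightarrow> real"
  defines "\<omega>p \<equiv> w_plus D d K h" and "\<omega>m \<equiv> w_minus D d K h" and "R \<equiv> Rvec D d h"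
  defines "tau_y_rdd \<equiv> beta_y0 n h \<omega>p R Y - beta_y0 n h \<omega>m R Y"
    and "tau_w_rdd \<equiv> beta_w0 n h \<omega>p R W - beta_w0 n h \<omega>m R W"
  defines "\<alpha>p \<equiv> fst (iv_sol n h \<omega>p R Y W Z)" and "\<gamma>p \<equiv> snd (iv_sol n h \<omega>p R Y W Z)"
    and "\<alpha>m \<equiv> fst (iv_sol n h \<omega>m R Y W Z)" and "\<gamma>m \<equiv> snd (iv_sol n h \<omega>m R Y W Z)"
  defines "tau_pdd \<equiv> (\<alpha>p $ 1 + beta_w0 n h \<omega>p R W \<bullet> \<gamma>p)
                    - (\<alpha>m $ 1 + beta_w0 n h \<omega>p R W \<bullet> \<gamma>m)"
  assumes K_nonneg: "\<And>u. K u \<ge> 0" and h_pos: "h > 0"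
    and inv_gram_p: "invertible (gram n \<omega>p R)"
    and inv_gram_m: "invertible (gram n \<omega>m R)"
    and iv_unique_p: "\<exists>!p. iv_eq n h \<omega>p R Y W Z (fst p) (snd p)"
    and iv_unique_m: "\<exists>!p. iv_eq n h \<omega>m R Y W Z (fst p) (snd p)"
    and inv_ZW: "invertible ((1 / real n) *\<^sub>R (\<Sum>i<n. \<omega>m i *\<^sub>R outer (Z i) (W_perp n \<omega>m R W i)))"
  shows "tau_pdd = tau_y_rdd - tau_w_rdd \<bullet> \<gamma>m
    \<and> \<gamma>m = matrix_inv ((1 / real n) *\<^sub>R (\<Sum>i<n. \<omega>m i *\<^sub>R outer (Z i) (W_perp n \<omega>m R W i)))
            *v ((1 / real n) *\<^sub>R (\<Sum>i<n. (\<omega>m i * Y_perp n \<omega>m R Y i) *\<^sub>R Z i))"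
proof -
  have nnp: "\<And>i. \<omega>p i \<ge> 0" and nnm: "\<And>i. \<omega>m i \<ge> 0"
    unfolding \<omega>p_def \<omega>m_def using w_nonneg[OF K_nonneg h_pos] by auto
  have ivp: "iv_eq n h \<omega>p R Y W Z \<alpha>p \<gamma>p"
    unfolding \<alpha>p_def \<gamma>p_def iv_sol_def using someI_ex[OF ex1_implies_ex[OF iv_unique_p]] by simp
  have ivm: "iv_eq n h \<omega>m R Y W Z \<alpha>m \<gamma>m"
    unfolding \<alpha>m_def \<gamma>m_def iv_sol_def using someI_ex[OF ex1_implies_ex[OF iv_unique_m]] by simp
  have by0: "\<And>\<omega>. (\<And>i. \<omega> i \<ge> 0) \<Longrightarrow> invertible (gram n \<omega> R) \<Longrightarrow>
     beta_y0 n h \<omega> R Y = (matrix_inv (gram n \<omega> R) *v (\<Sum>j<n. (\<omega> j * Y j) *\<^sub>R R j)) $ 1"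
    unfolding beta_y0_def using llfit_eq h_pos by blast
  have bw0: "\<And>\<omega>. (\<And>i. \<omega> i \<ge> 0) \<Longrightarrow> invertible (gram n \<omega> R) \<Longrightarrow>
     beta_w0 n h \<omega> R W = (\<chi> j. (matrix_inv (gram n \<omega> R) ** (\<Sum>j<n. \<omega> j *\<^sub>R outer (R j) (W j))) $ 1 $ j)"
  proof -
    fix \<omega> :: "nat \<Rightarrow> real" assume a1: "\<And>i. \<omega> i \<ge> 0" and a2: "invertible (gram n \<omega> R)"
    show "beta_w0 n h \<omega> R W = (\<chi> j. (matrix_inv (gram n \<omega> R) ** (\<Sum>j<n. \<omega> j *\<^sub>R outer (R j) (W j))) $ 1 $ j)"
      unfolding beta_w0_def vec_eq_iff vec_lambda_beta
    proof
      fix j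
      have "llfit n h \<omega> R (\<lambda>i. W i $ j) $ 1 = (matrix_inv (gram n \<omega> R) *v (\<Sum>i<n. (\<omega> i * W i $ j) *\<^sub>R R i)) $ 1"
        by (rule llfit_eq[OF a1 a2 h_pos])
      also have "... = (matrix_inv (gram n \<omega> R) ** (\<Sum>j<n. \<omega> j *\<^sub>R outer (R j) (W j))) $ 1 $ j"
        by (rule P_entry)
      finally show "llfit n h \<omega> R (\<lambda>i. W i $ j) $ 1 = (matrix_inv (gram n \<omega> R) ** (\<Sum>j<n. \<omega> j *\<^sub>R outer (R j) (W j))) $ 1 $ j" .
    qed
  qed
  have H1a: "\<And>a. (H1 h *v a) $ 1 = a $ 1" by (simp add: H1_mulv)
  have ap: "\<alpha>p $ 1 = beta_y0 n h \<omega>p R Y - beta_w0 n h \<omega>p R W \<bullet> \<gamma>p"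
    using iv_main(1)[OF inv_gram_p ivp] by0[OF nnp inv_gram_p] bw0[OF nnp inv_gram_p] H1a by simp
  have am: "\<alpha>m $ 1 = beta_y0 n h \<omega>m R Y - beta_w0 n h \<omega>m R W \<bullet> \<gamma>m"
    using iv_main(1)[OF inv_gram_m ivm] by0[OF nnm inv_gram_m] bw0[OF nnm inv_gram_m] H1a by simp
  have part1: "tau_pdd = tau_y_rdd - tau_w_rdd \<bullet> \<gamma>m"
    unfolding tau_pdd_def tau_y_rdd_def tau_w_rdd_def ap am by (simp add: inner_diff_left)
  define A where "A = (1 / real n) *\<^sub>R (\<Sum>i<n. \<omega>m i *\<^sub>R outer (Z i) (W_perp n \<omega>m R W i))"
  have "A *v \<gamma>m = (1 / real n) *\<^sub>R (\<Sum>i<n. (\<omega>m i * (W_perp n \<omega>m R W i \<bullet> \<gamma>m)) *\<^sub>R Z i)"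
    unfolding A_def scaleR_matrix_vector_assoc[symmetric] outer_sum_mulv ..
  also have "... = (1 / real n) *\<^sub>R (\<Sum>i<n. (\<omega>m i * Y_perp n \<omega>m R Y i) *\<^sub>R Z i)"
  proof (cases "n = 0")
    case True then show ?thesis by simp
  next
    case False
    have "(\<Sum>i<n. (\<omega>m i * (Y_perp n \<omega>m R Y i - W_perp n \<omega>m R W i \<bullet> \<gamma>m)) *\<^sub>R Z i) = 0"
      using iv_main(2)[OF inv_gram_m ivm] False by simp
    hence "(\<Sum>i<n. (\<omega>m i * Y_perp n \<omega>m R Y i) *\<^sub>R Z i) - (\<Sum>i<n. (\<omega>m i * (W_perp n \<omega>m R W i \<bullet> \<gamma>m)) *\<^sub>R Z i) = 0"
      by (simp add: right_diff_distrib scaleR_diff_left sum_subtractf)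
    thus ?thesis by simp
  qed
  finally have "A *v \<gamma>m = (1 / real n) *\<^sub>R (\<Sum>i<n. (\<omega>m i * Y_perp n \<omega>m R Y i) *\<^sub>R Z i)" .
  hence "\<gamma>m = matrix_inv A *v ((1 / real n) *\<^sub>R (\<Sum>i<n. (\<omega>m i * Y_perp n \<omega>m R Y i) *\<^sub>R Z i))"
    using minv_v(1)[of A \<gamma>m] inv_ZW A_def by simp
  with part1 show ?thesis unfolding A_def by simp
qed

end
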